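(* Let $n\ge3$, let $H$ be a non-trivial finitely generated abelian group, let $G$ be a non-trivial group with a surjective homomorphism $\sigma\colon G\to S_n$, and let $W=H\wr_\sigma G=H^n\rtimes_\sigma G$. Assume that every abelian normal subgroup of $W$ is contained in $H^n$. Then $H^n$ is a characteristic subgroup of $W$.
   Context: $H\wr_\sigma G=H^n\rtimes_\sigma G$ is the semidirect product in which $G$ acts on $H^n$ by permuting coordinates through $\sigma$: $g\cdot(h_1,\dots,h_n)=(h_{\sigma(g)(1)},\dots,h_{\sigma(g)(n)})$ (with the composition convention in $S_n$ making this a left action); elements are pairs $(\mathbf h,g)$ with $(\mathbf h,g)(\mathbf k,x)=(\mathbf h\cdot g\mathbf k,gx)$, and $H^n$ is identified with $\{(\mathbf h,1)\}$. *)

theory Defs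
  imports "HOL-Algebra.Algebra"
begin

text \<open>Symmetric group on {1..n} with the composition convention (p q)(i) = q (p i),
  i.e. "first p, then q".  With this convention the coordinate permutation
  g.(h_1,...,h_n) = (h_{sigma(g)(1)},...,h_{sigma(g)(n)}) is a left action.\<close>
definition sym_group_rc :: "nat \<Rightarrow> (nat \<Rightarrow> nat) monoid" where
  "sym_group_rc n = \<lparr> carrier = { p. p permutes {1..n} }, monoid.mult = (\<lambda>p q. q \<circ> p), one = id \<rparr>"

definition wreath_prod ::
  "('h, 'a) monoid_scheme \<Rightarrow> ('g, 'b) monoid_scheme \<Rightarrow> nat \<Rightarrow> ('g \<Rightarrow> nat \<Rightarrow> nat)
     \<Rightarrow> ((nat \<Rightarrow> 'h) \<times> 'g) monoid" where
  "wreath_prod H G n \<sigma> = \<lparr>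
     carrier = ({1..n} \<rightarrow>\<^sub>E carrier H) \<times> carrier G,
     monoid.mult = (\<lambda>(h, g) (k, x). ((\<lambda>i\<in>{1..n}. h i \<otimes>\<^bsub>H\<^esub> k (\<sigma> g i)), g \<otimes>\<^bsub>G\<^esub> x)),
     one = ((\<lambda>i\<in>{1..n}. \<one>\<^bsub>H\<^esub>), \<one>\<^bsub>G\<^esub>) \<rparr>"

definition wreath_base ::
  "('h, 'a) monoid_scheme \<Rightarrow> ('g, 'b) monoid_scheme \<Rightarrow> nat \<Rightarrow> ((nat \<Rightarrow> 'h) \<times> 'g) set" where
  "wreath_base H G n = ({1..n} \<rightarrow>\<^sub>E carrier H) \<times> {\<one>\<^bsub>G\<^esub>}"

definition characteristic :: "'a set \<Rightarrow> ('a, 'b) monoid_scheme \<Rightarrow> bool" where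
  "characteristic K W \<longleftrightarrow> subgroup K W \<and> (\<forall>\<phi> \<in> iso W W. \<phi> ` K = K)"

definition finitely_generated :: "('a, 'b) monoid_scheme \<Rightarrow> bool" where
  "finitely_generated H \<longleftrightarrow> (\<exists>S. finite S \<and> S \<subseteq> carrier H \<and> generate H S = carrier H)"

end

theory Submission
  imports Defs
begin

lemma wp_group:
  fixes H :: "('h, 'a) monoid_scheme" and G :: "('g, 'b) monoid_scheme"
  assumes H: "group H" and G: "group G" and \<sigma>_hom: "\<sigma> \<in> hom G (sym_group_rc n)"
  shows "group (wreath_prod H G n \<sigma>)"
proof -
  interpret H: group H by fact
  interpret G: group G by fact
  have perm: "\<sigma> g permutes {1..n}" if "g \<in> carrier G" for g
    using \<sigma>_hom that by (auto simp: hom_def sym_group_rc_def)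
  have mulp: "\<sigma> (x \<otimes>\<^bsub>G\<^esub> y) = \<sigma> y \<circ> \<sigma> x" if "x \<in> carrier G" "y \<in> carrier G" for x y
    using \<sigma>_hom that by (auto simp: hom_def sym_group_rc_def)
  have inr: "\<sigma> g i \<in> {1..n}" if "g \<in> carrier G" "i \<in> {1..n}" for g i
    using permutes_in_image[OF perm[OF that(1)]] that(2) by blast
  have inr1: "Suc 0 \<le> \<sigma> g i" "\<sigma> g i \<le> n" if "g \<in> carrier G" "Suc 0 \<le> i" "i \<le> n" for g i
    using inr[of g i] that by auto
  have one: "\<sigma> \<one>\<^bsub>G\<^esub> i = i" for i
  proof -
    have p: "\<sigma> \<one>\<^bsub>G\<^esub> permutes {1..n}" by (rule perm) simp
    have "\<sigma> \<one>\<^bsub>G\<^esub> = \<sigma> \<one>\<^bsub>G\<^esub> \<circ> \<sigma> \<one>\<^bsub>G\<^esub>" using mulp[of "\<one>\<^bsub>G\<^esub>" "\<one>\<^bsub>G\<^esub>"] by simp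
    hence "\<sigma> \<one>\<^bsub>G\<^esub> (\<sigma> \<one>\<^bsub>G\<^esub> i) = \<sigma> \<one>\<^bsub>G\<^esub> i" by (metis comp_apply)
    thus ?thesis using permutes_inj[OF p] by (simp add: inj_eq)
  qed
  show ?thesis
  proof (rule groupI)
    fix x y assume "x \<in> carrier (wreath_prod H G n \<sigma>)" "y \<in> carrier (wreath_prod H G n \<sigma>)"
    then show "x \<otimes>\<^bsub>wreath_prod H G n \<sigma>\<^esub> y \<in> carrier (wreath_prod H G n \<sigma>)"
      by (auto simp: wreath_prod_def PiE_def Pi_def inr inr1)
  next
    show "\<one>\<^bsub>wreath_prod H G n \<sigma>\<^esub> \<in> carrier (wreath_prod H G n \<sigma>)"
      by (auto simp: wreath_prod_def)
  next
    fix x y z assume "x \<in> carrier (wreath_prod H G n \<sigma>)" "y \<in> carrier (wreath_prod H G n \<sigma>)"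
      "z \<in> carrier (wreath_prod H G n \<sigma>)"
    then show "x \<otimes>\<^bsub>wreath_prod H G n \<sigma>\<^esub> y \<otimes>\<^bsub>wreath_prod H G n \<sigma>\<^esub> z =
      x \<otimes>\<^bsub>wreath_prod H G n \<sigma>\<^esub> (y \<otimes>\<^bsub>wreath_prod H G n \<sigma>\<^esub> z)"
      by (auto simp: wreath_prod_def PiE_def Pi_def inr inr1 mulp G.m_assoc H.m_assoc intro!: ext)
  next
    fix x assume "x \<in> carrier (wreath_prod H G n \<sigma>)"
    then show "\<one>\<^bsub>wreath_prod H G n \<sigma>\<^esub> \<otimes>\<^bsub>wreath_prod H G n \<sigma>\<^esub> x = x"
      by (auto simp: wreath_prod_def PiE_def Pi_def one extensional_def intro!: ext)
  next
    fix x assume x: "x \<in> carrier (wreath_prod H G n \<sigma>)"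
    obtain k g where kg: "x = (k, g)" by fastforce
    have k: "k \<in> {1..n} \<rightarrow>\<^sub>E carrier H" and g: "g \<in> carrier G" using x kg
      by (auto simp: wreath_prod_def)
    define y where "y = ((\<lambda>i\<in>{1..n}. inv\<^bsub>H\<^esub> k (\<sigma> (inv\<^bsub>G\<^esub> g) i)), inv\<^bsub>G\<^esub> g)"
    have "y \<in> carrier (wreath_prod H G n \<sigma>)"
      using k g by (auto simp: y_def wreath_prod_def PiE_def Pi_def inr inr1)
    moreover have "y \<otimes>\<^bsub>wreath_prod H G n \<sigma>\<^esub> x = \<one>\<^bsub>wreath_prod H G n \<sigma>\<^esub>"
      using k g by (auto simp: y_def kg wreath_prod_def PiE_def Pi_def inr inr1 intro!: ext)
    ultimately show "\<exists>y\<in>carrier (wreath_prod H G n \<sigma>). y \<otimes>\<^bsub>wreath_prod H G n \<sigma>\<^esub> x = \<one>\<^bsub>wreath_prod H G n \<sigma>\<^esub>"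
      by blast
  qed
qed

lemma iso_image_ab_normal:
  assumes W: "group W" and N: "N \<lhd> W"
    and comm: "\<And>a b. a \<in> N \<Longrightarrow> b \<in> N \<Longrightarrow> a \<otimes>\<^bsub>W\<^esub> b = b \<otimes>\<^bsub>W\<^esub> a"
    and phi: "\<phi> \<in> iso W W"
  shows "\<phi> ` N \<lhd> W" "comm_group (W\<lparr>carrier := \<phi> ` N\<rparr>)"
proof -
  show PN: "\<phi> ` N \<lhd> W" using iso_normal_subgroup[OF phi W W N] .
  have sg: "subgroup (\<phi> ` N) W" using PN normal_imp_subgroup by blast
  have gr: "group (W\<lparr>carrier := \<phi> ` N\<rparr>)" using group.subgroup_imp_group[OF W sg] .
  have NW: "N \<subseteq> carrier W" using N normal_imp_subgroup subgroup.subset by blast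
  have hm: "\<phi> \<in> hom W W" using phi by (simp add: iso_def)
  show "comm_group (W\<lparr>carrier := \<phi> ` N\<rparr>)"
  proof (rule group.group_comm_groupI[OF gr])
    fix x y assume "x \<in> carrier (W\<lparr>carrier := \<phi> ` N\<rparr>)" "y \<in> carrier (W\<lparr>carrier := \<phi> ` N\<rparr>)"
    then obtain a b where ab: "a \<in> N" "b \<in> N" "x = \<phi> a" "y = \<phi> b" by auto
    have "\<phi> a \<otimes>\<^bsub>W\<^esub> \<phi> b = \<phi> (a \<otimes>\<^bsub>W\<^esub> b)" using hm ab NW by (metis hom_mult subsetD)
    also have "\<dots> = \<phi> (b \<otimes>\<^bsub>W\<^esub> a)" using comm ab by simp
    also have "\<dots> = \<phi> b \<otimes>\<^bsub>W\<^esub> \<phi> a" using hm ab NW by (metis hom_mult subsetD)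
    finally show "x \<otimes>\<^bsub>W\<lparr>carrier := \<phi> ` N\<rparr>\<^esub> y = y \<otimes>\<^bsub>W\<lparr>carrier := \<phi> ` N\<rparr>\<^esub> x"
      using ab by simp
  qed
qed

theorem theorem3p10:
  fixes H :: "('h, 'a) monoid_scheme" and G :: "('g, 'b) monoid_scheme"
    and n :: nat and \<sigma> :: "'g \<Rightarrow> nat \<Rightarrow> nat"
  assumes n3: "n \<ge> 3"
    and H_ab: "comm_group H" and H_fg: "finitely_generated H"
    and H_nontriv: "carrier H \<noteq> {\<one>\<^bsub>H\<^esub>}"
    and G_grp: "group G" and G_nontriv: "carrier G \<noteq> {\<one>\<^bsub>G\<^esub>}"
    and \<sigma>_hom: "\<sigma> \<in> hom G (sym_group_rc n)"
    and \<sigma>_surj: "\<sigma> ` carrier G = carrier (sym_group_rc n)"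
    and ab_normal: "\<And>A. A \<lhd> wreath_prod H G n \<sigma> \<Longrightarrow>
                         comm_group ((wreath_prod H G n \<sigma>)\<lparr>carrier := A\<rparr>) \<Longrightarrow>
                         A \<subseteq> wreath_base H G n"
  shows "characteristic (wreath_base H G n) (wreath_prod H G n \<sigma>)"
proof -
  let ?W = "wreath_prod H G n \<sigma>"
  let ?B = "wreath_base H G n"
  have HG: "group H" using H_ab comm_group.axioms(2) by blast
  have W: "group ?W" using wp_group[OF HG G_grp \<sigma>_hom] .
  have "snd \<in> hom ?W G" by (auto simp: hom_def wreath_prod_def)
  then have gh: "group_hom ?W G snd" using W G_grp by (simp add: group_hom_def group_hom_axioms_def)
  have kB: "kernel ?W G snd = ?B" using group.is_monoid[OF G_grp] by (auto simp: kernel_def wreath_prod_def wreath_base_def)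
  have BN: "?B \<lhd> ?W" using group_hom.normal_kernel[OF gh] kB by simp
  have one: "\<sigma> \<one>\<^bsub>G\<^esub> i = i" for i
  proof -
    have perm: "\<sigma> g permutes {1..n}" if "g \<in> carrier G" for g
      using \<sigma>_hom that by (auto simp: hom_def sym_group_rc_def)
    have mulp: "\<sigma> (x \<otimes>\<^bsub>G\<^esub> y) = \<sigma> y \<circ> \<sigma> x" if "x \<in> carrier G" "y \<in> carrier G" for x y
      using \<sigma>_hom that by (auto simp: hom_def sym_group_rc_def)
    have p: "\<sigma> \<one>\<^bsub>G\<^esub> permutes {1..n}" by (rule perm) (simp add: group.is_monoid[OF G_grp])
    have "\<sigma> \<one>\<^bsub>G\<^esub> = \<sigma> \<one>\<^bsub>G\<^esub> \<circ> \<sigma> \<one>\<^bsub>G\<^esub>" using mulp[of "\<one>\<^bsub>G\<^esub>" "\<one>\<^bsub>G\<^esub>"] group.is_monoid[OF G_grp] by simp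
    hence "\<sigma> \<one>\<^bsub>G\<^esub> (\<sigma> \<one>\<^bsub>G\<^esub> i) = \<sigma> \<one>\<^bsub>G\<^esub> i" by (metis comp_apply)
    thus ?thesis using permutes_inj[OF p] by (simp add: inj_eq)
  qed
  have comm: "a \<otimes>\<^bsub>?W\<^esub> b = b \<otimes>\<^bsub>?W\<^esub> a" if "a \<in> ?B" "b \<in> ?B" for a b
    using that comm_monoid.m_comm[OF comm_group.axioms(1)[OF H_ab]]
    by (auto simp: wreath_base_def wreath_prod_def one PiE_def Pi_def intro!: ext)
  have "\<phi> ` ?B = ?B" if phi: "\<phi> \<in> iso ?W ?W" for \<phi>
  proof -
    have s1: "\<phi> ` ?B \<subseteq> ?B"
      using ab_normal iso_image_ab_normal[OF W BN comm phi] by blast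
    have phi': "inv_into (carrier ?W) \<phi> \<in> iso ?W ?W" using group.iso_set_sym[OF W phi] .
    have s2: "inv_into (carrier ?W) \<phi> ` ?B \<subseteq> ?B"
      using ab_normal iso_image_ab_normal[OF W BN comm phi'] by blast
    have surj: "\<phi> ` carrier ?W = carrier ?W" using phi by (simp add: iso_def bij_betw_def)
    have BW: "?B \<subseteq> carrier ?W" using BN normal_imp_subgroup subgroup.subset by blast
    have "?B \<subseteq> \<phi> ` ?B"
    proof
      fix b assume b: "b \<in> ?B"
      have "b = \<phi> (inv_into (carrier ?W) \<phi> b)" using surj b BW by (metis f_inv_into_f subsetD)
      moreover have "inv_into (carrier ?W) \<phi> b \<in> ?B" using s2 b by blast
      ultimately show "b \<in> \<phi> ` ?B" by blast
    qed
    with s1 show ?thesis by blast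
  qed
  moreover have "subgroup ?B ?W" using BN normal_imp_subgroup by blast
  ultimately show ?thesis by (simp add: characteristic_def)
qed

end
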